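(* Let $\nu\ge0$, $\epsilon\in\{0,1\}$, $\zeta$ real with $1+\zeta\nu^2\neq0$. For every smooth solution $U(X,T)$ of $$-2\nu^2U_XU_{XX}+3\epsilon U_XU-\nu^2U_{XXX}U+\tfrac23U_{XXX}-\tfrac23\nu^{5/2}U_{XXX}+\epsilon U_T-\nu^2U_{XXT}=0,$$ the Pfaffian system for $\gamma(X,T)$ $$-\gamma_X=\frac{3}{4(1+\zeta\nu^2)}\gamma^2-\Big(\nu^2U_{XX}-\epsilon U+\tfrac13\epsilon(\zeta+\sqrt\nu)\Big),$$ $$-\gamma_T=\frac{1}{2(1+\zeta\nu^2)}\Big(-\tfrac32U-\zeta-\sqrt\nu\Big)\gamma^2+U_X\gamma+U(\nu^2U_{XX}-\epsilon U)+\tfrac23(\nu^{5/2}-1)U_{XX}-\tfrac13\epsilon(\zeta+\sqrt\nu)U+\tfrac29\epsilon(\zeta^2+2\sqrt\nu\zeta+\nu)$$ is completely integrable; i.e. $\gamma$ is a quadratic pseudo-potential of this equation.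
   Context: A real function $\Gamma$ is a pseudo-potential of an equation if there are smooth functions $f,g$ of $\Gamma$, the independent variables, $U$ and finitely many derivatives of $U$ such that $\Omega_\Gamma=d\Gamma-(f\,dX+g\,dT)$ satisfies $d\Omega_\Gamma\equiv0\bmod\Omega_\Gamma$ on every solution; it is quadratic if $f,g$ are polynomials of degree at most two in $\Gamma$. *)

theory Defs
  imports "HOL-Analysis.Analysis"
begin

definition pdX :: "(real \<Rightarrow> real \<Rightarrow> real) \<Rightarrow> real \<Rightarrow> real \<Rightarrow> real" where
  "pdX u = (\<lambda>x t. deriv (\<lambda>x'. u x' t) x)"

definition pdT :: "(real \<Rightarrow> real \<Rightarrow> real) \<Rightarrow> real \<Rightarrow> real \<Rightarrow> real" where
  "pdT u = (\<lambda>x t. deriv (\<lambda>t'. u x t') t)"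

fun pds :: "bool list \<Rightarrow> (real \<Rightarrow> real \<Rightarrow> real) \<Rightarrow> real \<Rightarrow> real \<Rightarrow> real" where
  "pds [] u = u"
| "pds (b # bs) u = (if b then pdX else pdT) (pds bs u)"

definition smooth_on2 :: "(real \<times> real) set \<Rightarrow> (real \<Rightarrow> real \<Rightarrow> real) \<Rightarrow> bool" where
  "smooth_on2 S u \<longleftrightarrow>
     (\<forall>ws. \<forall>p\<in>S. (\<lambda>q. pds ws u (fst q) (snd q)) differentiable (at p))"

text \<open>Omega = d gamma - (f dX + g dT) with f, g depending on (gamma, X, T)
  (their dependence on U and its derivatives is already substituted).
  d Omega = 0 mod Omega on the solution amounts to the compatibility condition
  D_T f + f_gamma g = D_X g + g_gamma f for all gamma at all points.\<close>
definition pfaff_compatible ::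
  "(real \<Rightarrow> real \<Rightarrow> real \<Rightarrow> real) \<Rightarrow> (real \<Rightarrow> real \<Rightarrow> real \<Rightarrow> real) \<Rightarrow> (real \<times> real) set \<Rightarrow> bool" where
  "pfaff_compatible f g S \<longleftrightarrow>
     (\<forall>x t. (x, t) \<in> S \<longrightarrow> (\<forall>\<gamma>.
        deriv (\<lambda>t'. f \<gamma> x t') t + deriv (\<lambda>\<gamma>'. f \<gamma>' x t) \<gamma> * g \<gamma> x t
      = deriv (\<lambda>x'. g \<gamma> x' t) x + deriv (\<lambda>\<gamma>'. g \<gamma>' x t) \<gamma> * f \<gamma> x t))"

end

theory Submission
  imports Defs
begin

lemma partial_T_has:
  assumes "((\<lambda>q. V (fst q) (snd q)) has_derivative D) (at (x,t))"
  shows "((\<lambda>t'. V x t') has_real_derivative D (0,1)) (at t)"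
proof -
  have p: "((\<lambda>t'. (x,t')) has_derivative (\<lambda>v. (0,v))) (at t)"
    by (auto intro!: derivative_eq_intros)
  have c: "((\<lambda>t'. V x t') has_derivative (\<lambda>v. D (0,v))) (at t)"
    using has_derivative_compose[OF p assms] by simp
  have l: "linear D" using assms has_derivative_linear by blast
  have "(\<lambda>v. D (0,v)) = (\<lambda>v. D (0,1) * v)"
  proof
    fix v :: real
    have "D (0,v) = D (v *\<^sub>R (0,1))" by simp
    also have "\<dots> = v *\<^sub>R D (0,1)" using l linear_scale by blast
    finally show "D (0,v) = D (0,1) * v" by simp
  qed
  then show ?thesis using c by (simp add: has_field_derivative_def)
qed

lemma partial_X_has:
  assumes "((\<lambda>q. V (fst q) (snd q)) has_derivative D) (at (x,t))"
  shows "((\<lambda>x'. V x' t) has_real_derivative D (1,0)) (at x)"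
proof -
  have p: "((\<lambda>x'. (x',t)) has_derivative (\<lambda>v. (v,0))) (at x)"
    by (auto intro!: derivative_eq_intros)
  have c: "((\<lambda>x'. V x' t) has_derivative (\<lambda>v. D (v,0))) (at x)"
    using has_derivative_compose[OF p assms] by simp
  have l: "linear D" using assms has_derivative_linear by blast
  have "(\<lambda>v. D (v,0)) = (\<lambda>v. D (1,0) * v)"
  proof
    fix v :: real
    have "D (v,0) = D (v *\<^sub>R (1,0))" by simp
    also have "\<dots> = v *\<^sub>R D (1,0)" using l linear_scale by blast
    finally show "D (v,0) = D (1,0) * v" by simp
  qed
  then show ?thesis using c by (simp add: has_field_derivative_def)
qed

lemma pdT_has:
  assumes "(\<lambda>q. V (fst q) (snd q)) differentiable (at (x,t))"
  shows "((\<lambda>t'. V x t') has_real_derivative pdT V x t) (at t)"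
proof -
  obtain D where "((\<lambda>q. V (fst q) (snd q)) has_derivative D) (at (x,t))"
    using assms differentiable_def by blast
  from partial_T_has[OF this] show ?thesis
    unfolding pdT_def using DERIV_imp_deriv by metis
qed

lemma pdX_has:
  assumes "(\<lambda>q. V (fst q) (snd q)) differentiable (at (x,t))"
  shows "((\<lambda>x'. V x' t) has_real_derivative pdX V x t) (at x)"
proof -
  obtain D where "((\<lambda>q. V (fst q) (snd q)) has_derivative D) (at (x,t))"
    using assms differentiable_def by blast
  from partial_X_has[OF this] show ?thesis
    unfolding pdX_def using DERIV_imp_deriv by metis
qed

lemma schwarz:
  assumes S: "open S" "(x,t) \<in> S"
    and dV: "\<forall>p\<in>S. (\<lambda>q. V (fst q) (snd q)) differentiable (at p)"
    and dF: "(\<lambda>q. pdX V (fst q) (snd q)) differentiable (at (x,t))"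
    and dG: "(\<lambda>q. pdT V (fst q) (snd q)) differentiable (at (x,t))"
  shows "pdT (pdX V) x t = pdX (pdT V) x t"
proof -
  obtain DF where DF: "((\<lambda>q. pdX V (fst q) (snd q)) has_derivative DF) (at (x,t))"
    using dF differentiable_def by blast
  obtain DG where DG: "((\<lambda>q. pdT V (fst q) (snd q)) has_derivative DG) (at (x,t))"
    using dG differentiable_def by blast
  have e1: "pdT (pdX V) x t = DF (0,1)"
    using partial_T_has[OF DF] unfolding pdT_def using DERIV_imp_deriv by metis
  have e2: "pdX (pdT V) x t = DG (1,0)"
    using partial_X_has[OF DG] unfolding pdX_def using DERIV_imp_deriv by metis
  have lF: "linear DF" using DF has_derivative_linear by blast
  have lG: "linear DG" using DG has_derivative_linear by blast
  have main: "\<bar>DF (0,1) - DG (1,0)\<bar> \<le> e" if e: "e > 0" for e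
  proof -
    obtain d1 where d1: "d1 > 0" and hd1: "\<And>y. norm (y - (x,t)) < d1 \<Longrightarrow>
        norm (pdX V (fst y) (snd y) - pdX V x t - DF (y - (x,t))) \<le> e/8 * norm (y - (x,t))"
      using DF[unfolded has_derivative_at_alt] e by (metis fst_conv snd_conv divide_pos_pos zero_less_numeral)
    obtain d2 where d2: "d2 > 0" and hd2: "\<And>y. norm (y - (x,t)) < d2 \<Longrightarrow>
        norm (pdT V (fst y) (snd y) - pdT V x t - DG (y - (x,t))) \<le> e/8 * norm (y - (x,t))"
      using DG[unfolded has_derivative_at_alt] e by (metis fst_conv snd_conv divide_pos_pos zero_less_numeral)
    obtain r where r: "r > 0" "ball (x,t) r \<subseteq> S" using S open_contains_ball by blast
    define h where "h = min (min d1 d2) r / 4"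
    have h0: "h > 0" using d1 d2 r by (simp add: h_def)
    have nb: "norm ((s,\<tau>) - (x,t)) \<le> 2*h" if "x \<le> s" "s \<le> x + h" "t \<le> \<tau>" "\<tau> \<le> t + h" for s \<tau>
    proof -
      have "norm ((s,\<tau>) - (x,t)) = norm (s - x, \<tau> - t)" by simp
      also have "\<dots> \<le> norm (s - x) + norm (\<tau> - t)" by (rule norm_Pair_le)
      also have "\<dots> \<le> 2*h" using that by simp
      finally show ?thesis .
    qed
    have hd: "2*h < d1" "2*h < d2" "2*h < r" using d1 d2 r h0 by (auto simp: h_def)
    have inS: "(s,\<tau>) \<in> S" if "x \<le> s" "s \<le> x + h" "t \<le> \<tau>" "\<tau> \<le> t + h" for s \<tau>
    proof -
      have "dist (x,t) (s,\<tau>) = norm ((s,\<tau>) - (x,t))" by (simp add: dist_commute dist_norm)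
      then have "dist (x,t) (s,\<tau>) < r" using nb[OF that] hd by linarith
      then show ?thesis using r by auto
    qed
    obtain \<xi> where \<xi>: "x < \<xi>" "\<xi> < x + h" and
      m1: "(V (x+h) (t+h) - V (x+h) t) - (V x (t+h) - V x t)
          = ((x+h) - x) * (pdX V \<xi> (t+h) - pdX V \<xi> t)"
    proof -
      have "\<exists>z. x < z \<and> z < x + h \<and> (V (x+h) (t+h) - V (x+h) t) - (V x (t+h) - V x t)
          = ((x+h) - x) * (pdX V z (t+h) - pdX V z t)"
      proof (rule MVT2[where f = "\<lambda>s. V s (t+h) - V s t"])
        show "x < x + h" using h0 by simp
        fix s assume "x \<le> s" "s \<le> x + h"
        then have "(s, t+h) \<in> S" "(s,t) \<in> S" using inS h0 by auto
        then show "((\<lambda>s. V s (t+h) - V s t) has_real_derivative pdX V s (t+h) - pdX V s t) (at s)"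
          using dV pdX_has by (intro derivative_intros) auto
      qed
      then show ?thesis using that by blast
    qed
    obtain \<eta> where \<eta>: "t < \<eta>" "\<eta> < t + h" and
      m2: "(V (x+h) (t+h) - V x (t+h)) - (V (x+h) t - V x t)
          = ((t+h) - t) * (pdT V (x+h) \<eta> - pdT V x \<eta>)"
    proof -
      have "\<exists>z. t < z \<and> z < t + h \<and> (V (x+h) (t+h) - V x (t+h)) - (V (x+h) t - V x t)
          = ((t+h) - t) * (pdT V (x+h) z - pdT V x z)"
      proof (rule MVT2[where f = "\<lambda>\<tau>. V (x+h) \<tau> - V x \<tau>"])
        show "t < t + h" using h0 by simp
        fix \<tau> assume "t \<le> \<tau>" "\<tau> \<le> t + h"
        then have "(x+h, \<tau>) \<in> S" "(x,\<tau>) \<in> S" using inS h0 by auto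
        then show "((\<lambda>\<tau>. V (x+h) \<tau> - V x \<tau>) has_real_derivative pdT V (x+h) \<tau> - pdT V x \<tau>) (at \<tau>)"
          using dV pdT_has by (intro derivative_intros) auto
      qed
      then show ?thesis using that by blast
    qed
    have eqd: "pdX V \<xi> (t+h) - pdX V \<xi> t = pdT V (x+h) \<eta> - pdT V x \<eta>"
    proof -
      have "h * (pdX V \<xi> (t+h) - pdX V \<xi> t) = h * (pdT V (x+h) \<eta> - pdT V x \<eta>)"
        using m1 m2 by (simp add: algebra_simps)
      then show ?thesis using h0 by simp
    qed
    have n1: "norm ((\<xi>, t+h) - (x,t)) \<le> 2*h" using nb[of \<xi> "t+h"] \<xi> h0 by simp
    have n0: "norm ((\<xi>, t) - (x,t)) \<le> 2*h" using nb[of \<xi> t] \<xi> h0 by simp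
    have a1: "\<bar>pdX V \<xi> (t+h) - pdX V x t - DF ((\<xi>, t+h) - (x,t))\<bar> \<le> e/8 * (2*h)"
      using hd1[of "(\<xi>, t+h)"] n1 hd e
      by (smt (verit, ccfv_SIG) fst_conv mult_left_mono real_norm_def snd_conv zero_le_divide_iff)
    have a0: "\<bar>pdX V \<xi> t - pdX V x t - DF ((\<xi>, t) - (x,t))\<bar> \<le> e/8 * (2*h)"
      using hd1[of "(\<xi>, t)"] n0 hd e
      by (smt (verit, ccfv_SIG) fst_conv mult_left_mono real_norm_def snd_conv zero_le_divide_iff)
    have lin1: "DF ((\<xi>, t+h) - (x,t)) - DF ((\<xi>, t) - (x,t)) = h * DF (0,1)"
    proof -
      have "DF ((\<xi>, t+h) - (x,t)) - DF ((\<xi>, t) - (x,t)) = DF (((\<xi>, t+h) - (x,t)) - ((\<xi>, t) - (x,t)))"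
        using lF linear_diff by metis
      also have "((\<xi>, t+h) - (x,t)) - ((\<xi>, t) - (x,t)) = h *\<^sub>R (0,1)" by simp
      also have "DF (h *\<^sub>R (0,1)) = h *\<^sub>R DF (0,1)" using lF linear_scale by blast
      finally show ?thesis by simp
    qed
    have b1: "norm ((x+h, \<eta>) - (x,t)) \<le> 2*h" using nb[of "x+h" \<eta>] \<eta> h0 by simp
    have b0: "norm ((x, \<eta>) - (x,t)) \<le> 2*h" using nb[of x \<eta>] \<eta> h0 by simp
    have c1: "\<bar>pdT V (x+h) \<eta> - pdT V x t - DG ((x+h, \<eta>) - (x,t))\<bar> \<le> e/8 * (2*h)"
      using hd2[of "(x+h, \<eta>)"] b1 hd e
      by (smt (verit, ccfv_SIG) fst_conv mult_left_mono real_norm_def snd_conv zero_le_divide_iff)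
    have c0: "\<bar>pdT V x \<eta> - pdT V x t - DG ((x, \<eta>) - (x,t))\<bar> \<le> e/8 * (2*h)"
      using hd2[of "(x, \<eta>)"] b0 hd e
      by (smt (verit, ccfv_SIG) fst_conv mult_left_mono real_norm_def snd_conv zero_le_divide_iff)
    have lin2: "DG ((x+h, \<eta>) - (x,t)) - DG ((x, \<eta>) - (x,t)) = h * DG (1,0)"
    proof -
      have "DG ((x+h, \<eta>) - (x,t)) - DG ((x, \<eta>) - (x,t)) = DG (((x+h, \<eta>) - (x,t)) - ((x, \<eta>) - (x,t)))"
        using lG linear_diff by metis
      also have "((x+h, \<eta>) - (x,t)) - ((x, \<eta>) - (x,t)) = h *\<^sub>R (1,0)" by simp
      also have "DG (h *\<^sub>R (1,0)) = h *\<^sub>R DG (1,0)" using lG linear_scale by blast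
      finally show ?thesis by simp
    qed
    have "h * \<bar>DF (0,1) - DG (1,0)\<bar> \<le> h * e"
    proof -
      have "h * \<bar>DF (0,1) - DG (1,0)\<bar> = \<bar>h * DF (0,1) - h * DG (1,0)\<bar>"
        using h0 by (simp add: abs_mult right_diff_distrib[symmetric])
      also have "\<dots> \<le> h * e"
      proof -
        have "e/8 * (2*h) = h * e / 4" by simp
        then show ?thesis using a1 a0 c1 c0 lin1 lin2 eqd by linarith
      qed
      finally show ?thesis .
    qed
    then show ?thesis using h0 by simp
  qed
  have "DF (0,1) = DG (1,0)"
  proof (rule ccontr)
    assume "DF (0,1) \<noteq> DG (1,0)"
    then have "\<bar>DF (0,1) - DG (1,0)\<bar> > 0" by simp
    from main[OF half_gt_zero[OF this]] show False using \<open>\<bar>DF (0,1) - DG (1,0)\<bar> > 0\<close> by simp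
  qed
  then show ?thesis using e1 e2 by simp
qed

lemma alg0:
  fixes s z e g Aa Ab Ac Ad Ae Af k :: real
  assumes c: "k * (1 + z * (s^2)^2) = 1"
  shows "((s^2)^2 * Af - e * Ae) + (- (3/4 * k * (2 * g))) *
     (- (1/2 * k * (- 3/2 * Aa - z - s) * g^2
        + Ab * g + Aa * ((s^2)^2 * Ac - e * Aa)
        + 2/3 * ((s^2)^2 * s - 1) * Ac
        - 1/3 * e * (z + s) * Aa
        + 2/9 * e * (z^2 + 2 * s * z + s^2)))
   - ((- (1/2 * k * (- 3/2 * Ab) * g^2
        + Ac * g + Ab * ((s^2)^2 * Ac - e * Aa) + Aa * ((s^2)^2 * Ad - e * Ab)
        + 2/3 * ((s^2)^2 * s - 1) * Ad
        - 1/3 * e * (z + s) * Ab))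
     + (- (1/2 * k * (- 3/2 * Aa - z - s) * (2 * g) + Ab)) *
       (- (3/4 * k * g^2
        - ((s^2)^2 * Ac - e * Aa + 1/3 * e * (z + s)))))
   = - (- 2 * (s^2)^2 * Ab * Ac + 3 * e * Ab * Aa
      - (s^2)^2 * Ad * Aa + 2/3 * Ad
      - 2/3 * ((s^2)^2 * s) * Ad + e * Ae
      - (s^2)^2 * Af)"
  using c by algebra

lemma powr52: "(\<nu>::real) \<ge> 0 \<Longrightarrow> \<nu> powr (5/2) = ((sqrt \<nu>)^2)^2 * sqrt \<nu>"
proof -
  assume h: "\<nu> \<ge> 0"
  show ?thesis
  proof (cases "\<nu> = 0")
    case True then show ?thesis by simp
  next
    case False
    then have p: "\<nu> > 0" using h by simp
    have "\<nu> powr (5/2) = \<nu> powr (2 + 1/2)" by simp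
    also have "\<dots> = \<nu> powr 2 * \<nu> powr (1/2)" by (rule powr_add)
    also have "\<dots> = \<nu>^2 * sqrt \<nu>" using p by (simp add: powr_half_sqrt powr_numeral)
    finally show ?thesis using h by simp
  qed
qed

theorem corollary3:
  fixes \<nu> \<epsilon> \<zeta> :: real and U :: "real \<Rightarrow> real \<Rightarrow> real" and S :: "(real \<times> real) set"
  assumes "\<nu> \<ge> 0" and "\<epsilon> = 0 \<or> \<epsilon> = 1" and "1 + \<zeta> * \<nu>^2 \<noteq> 0"
    and "open S" and "smooth_on2 S U"
    and "\<forall>x t. (x, t) \<in> S \<longrightarrow>
      - 2 * \<nu>^2 * pdX U x t * pdX (pdX U) x t + 3 * \<epsilon> * pdX U x t * U x t
      - \<nu>^2 * pdX (pdX (pdX U)) x t * U x t + 2/3 * pdX (pdX (pdX U)) x t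
      - 2/3 * \<nu> powr (5/2) * pdX (pdX (pdX U)) x t + \<epsilon> * pdT U x t
      - \<nu>^2 * pdX (pdX (pdT U)) x t = 0"
  shows "pfaff_compatible
     (\<lambda>\<gamma> x t. - (3 / (4 * (1 + \<zeta> * \<nu>^2)) * \<gamma>^2
        - (\<nu>^2 * pdX (pdX U) x t - \<epsilon> * U x t + 1/3 * \<epsilon> * (\<zeta> + sqrt \<nu>))))
     (\<lambda>\<gamma> x t. - (1 / (2 * (1 + \<zeta> * \<nu>^2)) * (- 3/2 * U x t - \<zeta> - sqrt \<nu>) * \<gamma>^2
        + pdX U x t * \<gamma> + U x t * (\<nu>^2 * pdX (pdX U) x t - \<epsilon> * U x t)
        + 2/3 * (\<nu> powr (5/2) - 1) * pdX (pdX U) x t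
        - 1/3 * \<epsilon> * (\<zeta> + sqrt \<nu>) * U x t
        + 2/9 * \<epsilon> * (\<zeta>^2 + 2 * sqrt \<nu> * \<zeta> + \<nu>)))
     S"
  unfolding pfaff_compatible_def
proof (intro allI impI)
  fix x t \<gamma> assume xt: "(x,t) \<in> S"
  have dif: "\<And>ws p. p \<in> S \<Longrightarrow> (\<lambda>q. pds ws U (fst q) (snd q)) differentiable (at p)"
    using assms(5) unfolding smooth_on2_def by blast
  have d0: "\<forall>p\<in>S. (\<lambda>q. U (fst q) (snd q)) differentiable (at p)"
    using dif[of _ "[]"] by simp
  have d1: "\<forall>p\<in>S. (\<lambda>q. pdX U (fst q) (snd q)) differentiable (at p)"
    using dif[of _ "[True]"] by simp
  have d11: "\<forall>p\<in>S. (\<lambda>q. pdX (pdX U) (fst q) (snd q)) differentiable (at p)"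
    using dif[of _ "[True,True]"] by simp
  have d2: "\<forall>p\<in>S. (\<lambda>q. pdT U (fst q) (snd q)) differentiable (at p)"
    using dif[of _ "[False]"] by simp
  have d21: "\<forall>p\<in>S. (\<lambda>q. pdT (pdX U) (fst q) (snd q)) differentiable (at p)"
    using dif[of _ "[False,True]"] by simp
  have sw1: "pdT (pdX U) x' t = pdX (pdT U) x' t" if "(x',t) \<in> S" for x'
    using schwarz[OF assms(4) that] d0 d1 d2 that by blast
  have sw2: "pdT (pdX (pdX U)) x t = pdX (pdT (pdX U)) x t"
    using schwarz[OF assms(4) xt] d1 d11 d21 xt by blast
  obtain r where r: "r > 0" "ball (x,t) r \<subseteq> S" using assms(4) xt open_contains_ball by blast
  have ev: "eventually (\<lambda>x'. pdT (pdX U) x' t = pdX (pdT U) x' t) (nhds x)"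
  proof -
    have "\<forall>y. dist y x < r \<longrightarrow> pdT (pdX U) y t = pdX (pdT U) y t"
    proof (intro allI impI)
      fix y assume "dist y x < r"
      then have "(y,t) \<in> ball (x,t) r" by (simp add: dist_Pair_Pair dist_commute)
      then show "pdT (pdX U) y t = pdX (pdT U) y t" using r sw1 by blast
    qed
    then show ?thesis using r(1) eventually_nhds_metric by blast
  qed
  have sw3: "pdX (pdT (pdX U)) x t = pdX (pdX (pdT U)) x t"
    unfolding pdX_def[of "pdT (pdX U)"] pdX_def[of "pdX (pdT U)"]
    by (rule deriv_cong_ev[OF ev refl])
  have hUt: "((\<lambda>t'. U x t') has_real_derivative pdT U x t) (at t)" using pdT_has d0 xt by blast
  have hWt: "((\<lambda>t'. pdX (pdX U) x t') has_real_derivative pdT (pdX (pdX U)) x t) (at t)"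
    using pdT_has d11 xt by blast
  have hUx: "((\<lambda>x'. U x' t) has_real_derivative pdX U x t) (at x)" using pdX_has d0 xt by blast
  have hU1x: "((\<lambda>x'. pdX U x' t) has_real_derivative pdX (pdX U) x t) (at x)" using pdX_has d1 xt by blast
  have hWx: "((\<lambda>x'. pdX (pdX U) x' t) has_real_derivative pdX (pdX (pdX U)) x t) (at x)"
    using pdX_has d11 xt by blast
  define c where "c = 1 + \<zeta> * \<nu>^2"
  have c0: "c \<noteq> 0" using assms(3) by (simp add: c_def)
  define sn where "sn = sqrt \<nu>"
  define P where "P = \<nu> powr (5/2)"
  have D1: "deriv (\<lambda>t'. - (3 / (4 * c) * \<gamma>^2
        - (\<nu>^2 * pdX (pdX U) x t' - \<epsilon> * U x t' + 1/3 * \<epsilon> * (\<zeta> + sn)))) t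
      = \<nu>^2 * pdT (pdX (pdX U)) x t - \<epsilon> * pdT U x t"
    by (rule DERIV_imp_deriv) (auto intro!: derivative_eq_intros hUt hWt)
  have D2: "deriv (\<lambda>\<gamma>'. - (3 / (4 * c) * \<gamma>'^2
        - (\<nu>^2 * pdX (pdX U) x t - \<epsilon> * U x t + 1/3 * \<epsilon> * (\<zeta> + sn)))) \<gamma>
      = - (3 / (4 * c) * (2 * \<gamma>))"
    by (rule DERIV_imp_deriv) (use c0 in \<open>auto intro!: derivative_eq_intros\<close>)
  have D3: "deriv (\<lambda>x'. - (1 / (2 * c) * (- 3/2 * U x' t - \<zeta> - sn) * \<gamma>^2
        + pdX U x' t * \<gamma> + U x' t * (\<nu>^2 * pdX (pdX U) x' t - \<epsilon> * U x' t)
        + 2/3 * (P - 1) * pdX (pdX U) x' t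
        - 1/3 * \<epsilon> * (\<zeta> + sn) * U x' t
        + 2/9 * \<epsilon> * (\<zeta>^2 + 2 * sn * \<zeta> + \<nu>))) x
      = - (1 / (2 * c) * (- 3/2 * pdX U x t) * \<gamma>^2
        + pdX (pdX U) x t * \<gamma> + pdX U x t * (\<nu>^2 * pdX (pdX U) x t - \<epsilon> * U x t)
        + U x t * (\<nu>^2 * pdX (pdX (pdX U)) x t - \<epsilon> * pdX U x t)
        + 2/3 * (P - 1) * pdX (pdX (pdX U)) x t
        - 1/3 * \<epsilon> * (\<zeta> + sn) * pdX U x t)"
    by (rule DERIV_imp_deriv) (use c0 in \<open>auto intro!: derivative_eq_intros hUx hU1x hWx simp: field_simps\<close>)
  have D4: "deriv (\<lambda>\<gamma>'. - (1 / (2 * c) * (- 3/2 * U x t - \<zeta> - sn) * \<gamma>'^2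
        + pdX U x t * \<gamma>' + U x t * (\<nu>^2 * pdX (pdX U) x t - \<epsilon> * U x t)
        + 2/3 * (P - 1) * pdX (pdX U) x t
        - 1/3 * \<epsilon> * (\<zeta> + sn) * U x t
        + 2/9 * \<epsilon> * (\<zeta>^2 + 2 * sn * \<zeta> + \<nu>))) \<gamma>
      = - (1 / (2 * c) * (- 3/2 * U x t - \<zeta> - sn) * (2 * \<gamma>) + pdX U x t)"
    by (rule DERIV_imp_deriv) (use c0 in \<open>auto intro!: derivative_eq_intros simp: field_simps\<close>)
  have nu: "\<nu> = sn^2" using assms(1) by (simp add: sn_def)
  have Pe: "P = (sn^2)^2 * sn" using powr52[OF assms(1)] by (simp add: P_def sn_def)
  have ce: "1 + \<zeta> * (sn^2)^2 = c" using nu by (simp add: c_def)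
  have k1: "(1/c) * (1 + \<zeta> * (sn^2)^2) = 1" using c0 ce by simp
  have c3: "3 / (4 * c) = 3/4 * (1/c)" and c2: "1 / (2 * c) = 1/2 * (1/c)" by simp_all
  note A = alg0[OF k1, where e=\<epsilon> and g=\<gamma> and Aa="U x t" and Ab="pdX U x t"
      and Ac="pdX (pdX U) x t" and Ad="pdX (pdX (pdX U)) x t" and Ae="pdT U x t"
      and Af="pdX (pdX (pdT U)) x t"]
  have E: "- 2 * \<nu>^2 * pdX U x t * pdX (pdX U) x t + 3 * \<epsilon> * pdX U x t * U x t
      - \<nu>^2 * pdX (pdX (pdX U)) x t * U x t + 2/3 * pdX (pdX (pdX U)) x t
      - 2/3 * P * pdX (pdX (pdX U)) x t + \<epsilon> * pdT U x t
      - \<nu>^2 * pdX (pdX (pdT U)) x t = 0" using assms(6) xt by (simp add: P_def)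
  show "deriv (\<lambda>t'. - (3 / (4 * (1 + \<zeta> * \<nu>^2)) * \<gamma>^2
        - (\<nu>^2 * pdX (pdX U) x t' - \<epsilon> * U x t' + 1/3 * \<epsilon> * (\<zeta> + sqrt \<nu>)))) t +
    deriv (\<lambda>\<gamma>'. - (3 / (4 * (1 + \<zeta> * \<nu>^2)) * \<gamma>'^2
        - (\<nu>^2 * pdX (pdX U) x t - \<epsilon> * U x t + 1/3 * \<epsilon> * (\<zeta> + sqrt \<nu>)))) \<gamma> *
    (- (1 / (2 * (1 + \<zeta> * \<nu>^2)) * (- 3/2 * U x t - \<zeta> - sqrt \<nu>) * \<gamma>^2
        + pdX U x t * \<gamma> + U x t * (\<nu>^2 * pdX (pdX U) x t - \<epsilon> * U x t)
        + 2/3 * (\<nu> powr (5/2) - 1) * pdX (pdX U) x t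
        - 1/3 * \<epsilon> * (\<zeta> + sqrt \<nu>) * U x t
        + 2/9 * \<epsilon> * (\<zeta>^2 + 2 * sqrt \<nu> * \<zeta> + \<nu>))) =
    deriv (\<lambda>x'. - (1 / (2 * (1 + \<zeta> * \<nu>^2)) * (- 3/2 * U x' t - \<zeta> - sqrt \<nu>) * \<gamma>^2
        + pdX U x' t * \<gamma> + U x' t * (\<nu>^2 * pdX (pdX U) x' t - \<epsilon> * U x' t)
        + 2/3 * (\<nu> powr (5/2) - 1) * pdX (pdX U) x' t
        - 1/3 * \<epsilon> * (\<zeta> + sqrt \<nu>) * U x' t
        + 2/9 * \<epsilon> * (\<zeta>^2 + 2 * sqrt \<nu> * \<zeta> + \<nu>))) x +
    deriv (\<lambda>\<gamma>'. - (1 / (2 * (1 + \<zeta> * \<nu>^2)) * (- 3/2 * U x t - \<zeta> - sqrt \<nu>) * \<gamma>'^2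
        + pdX U x t * \<gamma>' + U x t * (\<nu>^2 * pdX (pdX U) x t - \<epsilon> * U x t)
        + 2/3 * (\<nu> powr (5/2) - 1) * pdX (pdX U) x t
        - 1/3 * \<epsilon> * (\<zeta> + sqrt \<nu>) * U x t
        + 2/9 * \<epsilon> * (\<zeta>^2 + 2 * sqrt \<nu> * \<zeta> + \<nu>))) \<gamma> *
    (- (3 / (4 * (1 + \<zeta> * \<nu>^2)) * \<gamma>^2
        - (\<nu>^2 * pdX (pdX U) x t - \<epsilon> * U x t + 1/3 * \<epsilon> * (\<zeta> + sqrt \<nu>))))"
    unfolding c_def[symmetric] P_def[symmetric] sn_def[symmetric]
    unfolding D1 D2 D3 D4 sw2 sw3
    using A E unfolding nu Pe c3 c2 by linarith
qed

end
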